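(* Let $A\subset\Pi$ be a finite set with $2\in A\neq\{2\}$, and let $\alpha:A\to\mathbb{N}_0$ be a function with $\alpha(2)=1$ and $\alpha(p)\in\{0,\dots,p-1\}$ for all $p\in A\setminus\{2\}$. Let $x$ be the product of the odd primes in $A$ and let $y$ be any element of $\mathbb{N}\cap\bigcap_{p\in A}(\alpha(p)+p\mathbb{Z})$. Then the set $E=\{y,x,2x\}$ satisfies $A_E=A$ and $\alpha_E=\alpha$.
   Context: $\mathbb{N}=\{1,2,\dots\}$, $\mathbb{N}_0=\{0\}\cup\mathbb{N}$, $\Pi$ the set of primes, $\Pi_z$ the set of prime divisors of $z$. For a nonempty finite $E\subseteq\mathbb{N}$: $\Pi_E=\bigcap_{z\in E}\Pi_z$; $A_E=\{p\in\Pi:\exists k\in\mathbb{N}\ (E\subseteq\{0,k\}+p\mathbb{Z})\}$ where $\{0,k\}+p\mathbb{Z}=p\mathbb{Z}\cup(k+p\mathbb{Z})$; and $\alpha_E:A_E\to\mathbb{N}_0$ is the unique function such that (i) $0\le\alpha_E(p)<p$ for all $p\in A_E$, (ii) $E\subseteq\{0,\alpha_E(p)\}+p\mathbb{Z}$ for all $p\in A_E$, (iii) $\alpha_E(2)=1$ and $\alpha_E(p)=0$ for all $p\in\Pi_E\setminus\{2\}$. *)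

theory Defs
  imports "HOL-Computational_Algebra.Primes"
begin

definition PiE :: "nat set \<Rightarrow> nat set" where
  "PiE E = {p. prime p \<and> (\<forall>z\<in>E. p dvd z)}"

definition in_two_classes :: "nat set \<Rightarrow> nat \<Rightarrow> int \<Rightarrow> bool" where
  "in_two_classes E p k \<longleftrightarrow> (\<forall>z\<in>E. int z mod int p = 0 \<or> int z mod int p = k mod int p)"

definition AE :: "nat set \<Rightarrow> nat set" where
  "AE E = {p. prime p \<and> (\<exists>k::nat. k \<ge> 1 \<and> in_two_classes E p (int k))}"

text \<open>alpha_E (only meaningful on AE E); defined pointwise as the unique value
  satisfying (i)-(iii), which is equivalent to the unique function.\<close>
definition alphaE :: "nat set \<Rightarrow> nat \<Rightarrow> nat" where
  "alphaE E p = (THE a. a < p \<and> in_two_classes E p (int a) \<and>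
      (p = 2 \<longrightarrow> a = 1) \<and> (p \<in> PiE E - {2} \<longrightarrow> a = 0))"

end

theory Submission
  imports Defs
begin

theorem lemma3p3:
  fixes A :: "nat set" and \<alpha> :: "nat \<Rightarrow> nat" and y :: nat
  assumes "finite A" and "\<forall>p\<in>A. prime p" and "2 \<in> A" and "A \<noteq> {2}"
    and "\<alpha> 2 = 1" and "\<forall>p\<in>A - {2}. \<alpha> p < p"
    and "y \<ge> 1" and "\<forall>p\<in>A. int y mod int p = int (\<alpha> p) mod int p"
  defines "x \<equiv> (\<Prod>p\<in>A - {2}. p)"
  shows "AE {y, x, 2 * x} = A \<and> (\<forall>p\<in>A. alphaE {y, x, 2 * x} p = \<alpha> p)"
proof -
  let ?E = "{y, x, 2 * x}"
  have fin: "finite (A - {2})" using assms(1) by simp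
  have xodd: "odd x" unfolding x_def
  proof (subst even_prod_iff[OF fin], rule notI)
    assume "\<exists>a\<in>A - {2}. even a"
    then obtain a where a: "a \<in> A - {2}" "even a" by blast
    then have "prime a" using assms(2) by auto
    have "2 = a" using primes_dvd_imp_eq[OF two_is_prime_nat \<open>prime a\<close>] a(2) by simp
    with a(1) show False by simp
  qed
  have dx: "p dvd x" if "p \<in> A - {2}" for p unfolding x_def
    using that fin by (simp add: dvd_prod_eqI)
  have ndx: "\<not> p dvd x" if pp: "prime p" "p \<notin> A" for p
  proof
    assume "p dvd x"
    then obtain q where q: "q \<in> A - {2}" "p dvd q"
      using prime_dvd_prod_iff[OF fin pp(1)] unfolding x_def by auto
    then have "prime q" using assms(2) by auto
    with q pp have "p = q" using primes_dvd_imp_eq by blast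
    with q pp show False by simp
  qed
  have zm: "int z mod int p = int (z mod p)" for z p by (simp add: zmod_int)
  have sub: "AE ?E \<subseteq> A"
  proof
    fix p assume "p \<in> AE ?E"
    then obtain k :: nat where p: "prime p" and k: "in_two_classes ?E p (int k)"
      unfolding AE_def by auto
    show "p \<in> A"
    proof (rule ccontr)
      assume nA: "p \<notin> A"
      then have "p \<noteq> 2" using assms(3) by auto
      have n1: "x mod p \<noteq> 0" using ndx[OF p nA] by (simp add: dvd_eq_mod_eq_0)
      have n2: "(2*x) mod p \<noteq> 0"
      proof
        assume "(2*x) mod p = 0"
        then have "p dvd 2 * x" by auto
        then have "p dvd 2 \<or> p dvd x" using p prime_dvd_mult_iff by blast
        then show False using ndx[OF p nA] \<open>p \<noteq> 2\<close> p
          using primes_dvd_imp_eq[OF p two_is_prime_nat] by blast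
      qed
      from k have "x mod p = k mod p" "(2*x) mod p = k mod p"
        unfolding in_two_classes_def using n1 n2 zm
        by (auto simp del: of_nat_mult simp add: of_nat_mod[symmetric])
      then have "(2*x) mod p = x mod p" by simp
      then have "p dvd 2*x - x" using mod_eq_dvd_iff_nat[of x "2*x" p] by simp
      then show False using n1 by (simp add: dvd_eq_mod_eq_0)
    qed
  qed
  have itc: "in_two_classes ?E p (int (\<alpha> p))" if "p \<in> A" for p
  proof (cases "p = 2")
    case True
    then show ?thesis using xodd assms(5) assms(8) that unfolding in_two_classes_def
      by (auto simp: zm odd_iff_mod_2_eq_one)
  next
    case False
    then have "p dvd x" using dx that by auto
    then show ?thesis using assms(8) that unfolding in_two_classes_def
      by (auto simp: zm)
  qed
  have sup: "A \<subseteq> AE ?E"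
  proof
    fix p assume pA: "p \<in> A"
    have p: "prime p" using pA assms(2) by auto
    show "p \<in> AE ?E"
    proof (cases "\<alpha> p = 0")
      case True
      have "in_two_classes ?E p (int p)" using itc[OF pA] True
        unfolding in_two_classes_def by auto
      moreover have "p \<ge> 1" using p prime_ge_1_nat by blast
      ultimately show ?thesis unfolding AE_def using p by blast
    next
      case False
      then show ?thesis unfolding AE_def using p itc[OF pA]
        by (intro CollectI conjI exI[of _ "\<alpha> p"]) auto
    qed
  qed
  have alph: "alphaE ?E p = \<alpha> p" if pA: "p \<in> A" for p
    unfolding alphaE_def
  proof (rule the_equality)
    have lt: "\<alpha> p < p" using pA assms(5,6) by (cases "p = 2") auto
    show "\<alpha> p < p \<and> in_two_classes ?E p (int (\<alpha> p)) \<and> (p = 2 \<longrightarrow> \<alpha> p = 1) \<and>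
      (p \<in> PiE ?E - {2} \<longrightarrow> \<alpha> p = 0)"
    proof (intro conjI impI)
      show "\<alpha> p < p" by (fact lt)
      show "in_two_classes ?E p (int (\<alpha> p))" using itc[OF pA] .
      show "p = 2 \<Longrightarrow> \<alpha> p = 1" using assms(5) by simp
      assume "p \<in> PiE ?E - {2}"
      then have "p dvd y" unfolding PiE_def by auto
      then have "int y mod int p = 0" by (simp add: zm)
      then have "int (\<alpha> p) mod int p = 0" using assms(8) pA by simp
      then show "\<alpha> p = 0" using lt by (simp add: zm)
    qed
    fix a assume H: "a < p \<and> in_two_classes ?E p (int a) \<and> (p = 2 \<longrightarrow> a = 1) \<and>
      (p \<in> PiE ?E - {2} \<longrightarrow> a = 0)"
    have lt: "\<alpha> p < p" using pA assms(5,6) by (cases "p = 2") auto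
    show "a = \<alpha> p"
    proof (cases "p = 2")
      case True then show ?thesis using H assms(5) by simp
    next
      case False
      then have "p dvd x" using dx pA by auto
      show ?thesis
      proof (cases "p dvd y")
        case True
        then have "p \<in> PiE ?E - {2}" unfolding PiE_def using \<open>p dvd x\<close> False pA assms(2) by auto
        then have "a = 0" using H by auto
        moreover have "\<alpha> p = 0"
        proof -
          have "int y mod int p = 0" using True by (simp add: zm)
          then have "int (\<alpha> p) mod int p = 0" using assms(8) pA by simp
          then show ?thesis using lt by (simp add: zm)
        qed
        ultimately show ?thesis by simp
      next
        case nd: False
        then have "y mod p \<noteq> 0" by (simp add: dvd_eq_mod_eq_0)
        with H have "y mod p = a mod p" unfolding in_two_classes_def
          by (auto simp: zm)
        moreover have "y mod p = \<alpha> p mod p" using assms(8) pA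
          by (simp add: zm)
        ultimately show ?thesis using H lt by simp
      qed
    qed
  qed
  show ?thesis using sub sup alph by blast
qed

end
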